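(* Let $\Gamma=(V,E,\mathbf I)$ be a connected locally finite graph with $E\ne\emptyset$ and let $G\le\mathrm{Aut}\,\Gamma$ be such that $\Gamma$ is $G$-vertex-rotary, of valency $k$ and edge-multiplicity $\lambda$. Let $\alpha,\beta$ be adjacent vertices, $e$ an edge incident with both, $H=G_\alpha$, $J=G_e$. Then (a) $\Gamma\cong\mathrm{Cos}(G,H,J)$, and $G=\langle a,z\rangle$ where $H=\langle a\rangle\cong\mathbb Z_{k\lambda}$, $H\cap H^z=\langle a^k\rangle\cong\mathbb Z_\lambda$, $J=\langle z\rangle\cong\mathbb Z_2$ and $H\cap J=1$; (b) $z\notin\langle a\rangle$, $z^a\notin\langle a\rangle$, $(a,z)$ is a rotary pair for $G$, and $G$ acts regularly on the set of arcs of $\Gamma$.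
   Context: Graphs are triples $(V,E,\mathbf I)$, each edge incident with exactly two distinct vertices, multiple edges allowed. $\Gamma$ is $G$-vertex-rotary if $G$ is arc-transitive on $\Gamma$ and the stabiliser $G_\alpha$ of a vertex $\alpha$ induces a transitive cyclic group on the set $E(\alpha)$ of edges incident with $\alpha$. A rotary pair for a group $G$ is an ordered pair $(a,z)$ of elements with $G=\langle a,z\rangle$, $|a|$ finite, $|z|=2$ and $z\notin\langle a\rangle$. $\mathrm{Cos}(G,H,J)$: vertices $\{Hx\}$, edges $\{Jy\}$, $Hx$ incident with $Jy$ iff $yx^{-1}\in JH$. *)

theory Defs
  imports "HOL-Algebra.Algebra"
begin

definition graph :: "'v set \<Rightarrow> 'e set \<Rightarrow> ('v \<times> 'e) set \<Rightarrow> bool" where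
  "graph V E I \<longleftrightarrow> I \<subseteq> V \<times> E \<and> (\<forall>e\<in>E. card {v. (v, e) \<in> I} = 2)"

definition edges_at :: "('v \<times> 'e) set \<Rightarrow> 'v \<Rightarrow> 'e set" where
  "edges_at I v = {e. (v, e) \<in> I}"

definition adjacent :: "('v \<times> 'e) set \<Rightarrow> 'v \<Rightarrow> 'v \<Rightarrow> bool" where
  "adjacent I u v \<longleftrightarrow> u \<noteq> v \<and> (\<exists>e. (u, e) \<in> I \<and> (v, e) \<in> I)"

definition connected_graph :: "'v set \<Rightarrow> ('v \<times> 'e) set \<Rightarrow> bool" where
  "connected_graph V I \<longleftrightarrow>
     (\<forall>u\<in>V. \<forall>v\<in>V. (u, v) \<in> {(x, y). adjacent I x y}\<^sup>*)"

definition locally_finite :: "'v set \<Rightarrow> ('v \<times> 'e) set \<Rightarrow> bool" where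
  "locally_finite V I \<longleftrightarrow> (\<forall>v\<in>V. finite (edges_at I v))"

definition neighbours :: "'v set \<Rightarrow> ('v \<times> 'e) set \<Rightarrow> 'v \<Rightarrow> 'v set" where
  "neighbours V I v = {u\<in>V. adjacent I v u}"

definition edges_between :: "('v \<times> 'e) set \<Rightarrow> 'v \<Rightarrow> 'v \<Rightarrow> 'e set" where
  "edges_between I u v = {e. (u, e) \<in> I \<and> (v, e) \<in> I}"

text \<open>Arcs of a graph with multiple edges: incident vertex-edge pairs (alpha, e).\<close>
definition arcs :: "('v \<times> 'e) set \<Rightarrow> ('v \<times> 'e) set" where
  "arcs I = I"

definition auts :: "'v set \<Rightarrow> 'e set \<Rightarrow> ('v \<times> 'e) set \<Rightarrow> (('v \<Rightarrow> 'v) \<times> ('e \<Rightarrow> 'e)) set" where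
  "auts V E I = {(f, g). bij_betw f V V \<and> bij_betw g E E \<and>
       (\<forall>x. x \<notin> V \<longrightarrow> f x = x) \<and> (\<forall>x. x \<notin> E \<longrightarrow> g x = x) \<and>
       (\<forall>v\<in>V. \<forall>e\<in>E. (v, e) \<in> I \<longleftrightarrow> (f v, g e) \<in> I)}"

definition Aut_group :: "'v set \<Rightarrow> 'e set \<Rightarrow> ('v \<times> 'e) set \<Rightarrow> (('v \<Rightarrow> 'v) \<times> ('e \<Rightarrow> 'e)) monoid" where
  "Aut_group V E I = \<lparr>carrier = auts V E I,
      monoid.mult = (\<lambda>(f, g) (f', g'). (f \<circ> f', g \<circ> g')), one = (id, id)\<rparr>"

definition arc_act :: "('v \<Rightarrow> 'v) \<times> ('e \<Rightarrow> 'e) \<Rightarrow> 'v \<times> 'e \<Rightarrow> 'v \<times> 'e" where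
  "arc_act g d = (fst g (fst d), snd g (snd d))"

definition vstab :: "(('v \<Rightarrow> 'v) \<times> ('e \<Rightarrow> 'e)) set \<Rightarrow> 'v \<Rightarrow> (('v \<Rightarrow> 'v) \<times> ('e \<Rightarrow> 'e)) set" where
  "vstab G v = {g\<in>G. fst g v = v}"

definition estab :: "(('v \<Rightarrow> 'v) \<times> ('e \<Rightarrow> 'e)) set \<Rightarrow> 'e \<Rightarrow> (('v \<Rightarrow> 'v) \<times> ('e \<Rightarrow> 'e)) set" where
  "estab G e = {g\<in>G. snd g e = e}"

definition arc_transitive :: "('v \<times> 'e) set \<Rightarrow> (('v \<Rightarrow> 'v) \<times> ('e \<Rightarrow> 'e)) set \<Rightarrow> bool" where
  "arc_transitive I G \<longleftrightarrow> (\<forall>d\<in>arcs I. \<forall>d'\<in>arcs I. \<exists>g\<in>G. arc_act g d = d')"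

definition arc_regular :: "('v \<times> 'e) set \<Rightarrow> (('v \<Rightarrow> 'v) \<times> ('e \<Rightarrow> 'e)) set \<Rightarrow> bool" where
  "arc_regular I G \<longleftrightarrow> (\<forall>d\<in>arcs I. \<forall>d'\<in>arcs I. \<exists>!g. g \<in> G \<and> arc_act g d = d')"

text \<open>G-vertex-rotary: G is arc-transitive and, for each vertex alpha, the group of
  permutations of E(alpha) induced by G_alpha is cyclic (generated by the permutation
  induced by some c in G_alpha) and transitive on E(alpha).\<close>
definition vertex_rotary :: "'v set \<Rightarrow> 'e set \<Rightarrow> ('v \<times> 'e) set \<Rightarrow> (('v \<Rightarrow> 'v) \<times> ('e \<Rightarrow> 'e)) set \<Rightarrow> bool" where
  "vertex_rotary V E I G \<longleftrightarrow> arc_transitive I G \<and>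
     (\<forall>\<alpha>\<in>V.
        (\<exists>c\<in>vstab G \<alpha>. \<forall>g\<in>vstab G \<alpha>. \<exists>n::int. \<forall>e\<in>edges_at I \<alpha>.
             snd g e = snd (c [^]\<^bsub>Aut_group V E I\<^esub> n) e) \<and>
        (\<forall>e\<in>edges_at I \<alpha>. \<forall>e'\<in>edges_at I \<alpha>. \<exists>g\<in>vstab G \<alpha>. snd g e = e'))"

definition graph_isomorphic ::
  "'v set \<Rightarrow> 'e set \<Rightarrow> ('v \<times> 'e) set \<Rightarrow> 'w set \<Rightarrow> 'f set \<Rightarrow> ('w \<times> 'f) set \<Rightarrow> bool" where
  "graph_isomorphic V E I V' E' I' \<longleftrightarrow> (\<exists>\<phi> \<psi>. bij_betw \<phi> V V' \<and> bij_betw \<psi> E E' \<and>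
      (\<forall>v\<in>V. \<forall>e\<in>E. (v, e) \<in> I \<longleftrightarrow> (\<phi> v, \<psi> e) \<in> I'))"

definition cos_V :: "('a, 'b) monoid_scheme \<Rightarrow> 'a set \<Rightarrow> 'a set set" where
  "cos_V G H = rcosets\<^bsub>G\<^esub> H"

definition cos_E :: "('a, 'b) monoid_scheme \<Rightarrow> 'a set \<Rightarrow> 'a set set" where
  "cos_E G J = rcosets\<^bsub>G\<^esub> J"

definition cos_I :: "('a, 'b) monoid_scheme \<Rightarrow> 'a set \<Rightarrow> 'a set \<Rightarrow> ('a set \<times> 'a set) set" where
  "cos_I G H J = {(H #>\<^bsub>G\<^esub> x, J #>\<^bsub>G\<^esub> y) | x y. x \<in> carrier G \<and> y \<in> carrier G \<and>
        y \<otimes>\<^bsub>G\<^esub> inv\<^bsub>G\<^esub> x \<in> J <#>\<^bsub>G\<^esub> H}"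

definition conj_set :: "('a, 'b) monoid_scheme \<Rightarrow> 'a set \<Rightarrow> 'a \<Rightarrow> 'a set" where
  "conj_set G H z = {inv\<^bsub>G\<^esub> z \<otimes>\<^bsub>G\<^esub> h \<otimes>\<^bsub>G\<^esub> z | h. h \<in> H}"

definition rotary_pair :: "('a, 'b) monoid_scheme \<Rightarrow> 'a \<Rightarrow> 'a \<Rightarrow> bool" where
  "rotary_pair G a z \<longleftrightarrow> a \<in> carrier G \<and> z \<in> carrier G \<and>
     generate G {a, z} = carrier G \<and> group.ord G a \<noteq> 0 \<and> group.ord G z = 2 \<and>
     z \<notin> generate G {a}"

end

theory Submission
  imports Defs
begin


lemma cyclic_iso:
  assumes grp: "group A" and a: "a \<in> carrier A" and m: "group.ord A a = m" "m > 0"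
  shows "A\<lparr>carrier := generate A {a}\<rparr> \<cong> integer_mod_group m"
proof -
  interpret group A by (rule grp)
  define f where "f = (\<lambda>i::int. a [^]\<^bsub>A\<^esub> i)"
  have gen: "generate A {a} = range f" using generate_pow[OF a] unfolding f_def by auto
  have fmod: "f (i mod int m) = f i" for i
    unfolding f_def using int_pow_eq[OF a] m by (simp add: mod_eq_dvd_iff)
  have carZ: "carrier (integer_mod_group m) = {0..<int m}"
    using m by (simp add: carrier_integer_mod_group)
  have "f \<in> iso (integer_mod_group m) (A\<lparr>carrier := generate A {a}\<rparr>)"
  proof (unfold iso_def, intro CollectI conjI)
    show "f \<in> hom (integer_mod_group m) (A\<lparr>carrier := generate A {a}\<rparr>)"
      unfolding hom_def using gen fmod
      by (auto simp: f_def a int_pow_mult)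
    show "bij_betw f (carrier (integer_mod_group m)) (carrier (A\<lparr>carrier := generate A {a}\<rparr>))"
    proof (unfold bij_betw_def, intro conjI)
      show "inj_on f (carrier (integer_mod_group m))"
      proof (rule inj_onI)
        fix x y assume xy: "x \<in> carrier (integer_mod_group m)" "y \<in> carrier (integer_mod_group m)" "f x = f y"
        then have "int m dvd y - x" using int_pow_eq[OF a] m by (simp add: f_def)
        with xy(1,2) carZ show "x = y"
          by (metis atLeastLessThan_iff mod_pos_pos_trivial mod_eq_dvd_iff)
      qed
      show "f ` carrier (integer_mod_group m) = carrier (A\<lparr>carrier := generate A {a}\<rparr>)"
      proof -
        have "f ` {0..<int m} = range f"
        proof
          show "range f \<subseteq> f ` {0..<int m}"
          proof
            fix b assume "b \<in> range f"
            then obtain i where "b = f i" by auto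
            then have "b = f (i mod int m)" using fmod by simp
            moreover have "i mod int m \<in> {0..<int m}" using m by simp
            ultimately show "b \<in> f ` {0..<int m}" by blast
          qed
        qed auto
        then show ?thesis using carZ gen by simp
      qed
    qed
  qed
  then have "integer_mod_group m \<cong> A\<lparr>carrier := generate A {a}\<rparr>" by (rule is_isoI)
  then show ?thesis using group.iso_sym[OF group_integer_mod_group] by blast
qed




lemma Aut_group_simps [simp]:
  "carrier (Aut_group V E I) = auts V E I"
  "one (Aut_group V E I) = (id, id)"
  by (auto simp: Aut_group_def split: prod.splits)

lemma Aut_group_mult:
  "monoid.mult (Aut_group V E I) x y = (fst x \<circ> fst y, snd x \<circ> snd y)"
  by (auto simp: Aut_group_def split: prod.splits)

lemma act_multAG [simp]:
  "fst (x \<otimes>\<^bsub>Aut_group V E I\<^esub> y) v = fst x (fst y v)"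
  "snd (x \<otimes>\<^bsub>Aut_group V E I\<^esub> y) e = snd x (snd y e)"
  by (simp_all add: Aut_group_mult)

lemma auts_I:
  assumes "(f, g) \<in> auts V E I" "I \<subseteq> V \<times> E"
  shows "(v, e) \<in> I \<longleftrightarrow> (f v, g e) \<in> I"
proof -
  have f: "bij_betw f V V" "\<forall>x. x \<notin> V \<longrightarrow> f x = x" and g: "bij_betw g E E" "\<forall>x. x \<notin> E \<longrightarrow> g x = x"
    and inc: "\<forall>v\<in>V. \<forall>e\<in>E. (v, e) \<in> I \<longleftrightarrow> (f v, g e) \<in> I" using assms(1) by (auto simp: auts_def)
  show ?thesis
  proof (cases "v \<in> V \<and> e \<in> E")
    case True then show ?thesis using inc by blast
  next
    case False
    then have "\<not> (f v \<in> V \<and> g e \<in> E)"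
      using f g by (metis bij_betw_iff_bijections)
    then show ?thesis using False assms(2) by blast
  qed
qed

lemma group_Aut: "group (Aut_group V E I)"
proof (rule groupI)
  fix x y assume x: "x \<in> carrier (Aut_group V E I)" and y: "y \<in> carrier (Aut_group V E I)"
  obtain f g where xfg: "x = (f, g)" by force
  obtain f' g' where yfg: "y = (f', g')" by force
  from x y show "x \<otimes>\<^bsub>Aut_group V E I\<^esub> y \<in> carrier (Aut_group V E I)"
  proof -
    have f: "bij_betw f V V" "\<forall>x. x \<notin> V \<longrightarrow> f x = x" and g: "bij_betw g E E" "\<forall>x. x \<notin> E \<longrightarrow> g x = x"
      and i1: "\<forall>v\<in>V. \<forall>e\<in>E. (v, e) \<in> I \<longleftrightarrow> (f v, g e) \<in> I" using x xfg by (auto simp: auts_def)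
    have f': "bij_betw f' V V" "\<forall>x. x \<notin> V \<longrightarrow> f' x = x" and g': "bij_betw g' E E" "\<forall>x. x \<notin> E \<longrightarrow> g' x = x"
      and i2: "\<forall>v\<in>V. \<forall>e\<in>E. (v, e) \<in> I \<longleftrightarrow> (f' v, g' e) \<in> I" using y yfg by (auto simp: auts_def)
    have "\<forall>v\<in>V. \<forall>e\<in>E. ((v, e) \<in> I) = ((f (f' v), g (g' e)) \<in> I)"
      using i1 i2 f'(1) g'(1) by (metis bij_betwE)
    then have "(f \<circ> f', g \<circ> g') \<in> auts V E I"
      unfolding auts_def using f f' g g' by (auto intro: bij_betw_trans)
    then show ?thesis using xfg yfg by (simp add: Aut_group_mult)
  qed
next
  show "\<one>\<^bsub>Aut_group V E I\<^esub> \<in> carrier (Aut_group V E I)"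
    by (auto simp: auts_def)
next
  fix x y z show "x \<otimes>\<^bsub>Aut_group V E I\<^esub> y \<otimes>\<^bsub>Aut_group V E I\<^esub> z =
           x \<otimes>\<^bsub>Aut_group V E I\<^esub> (y \<otimes>\<^bsub>Aut_group V E I\<^esub> z)"
    by (simp add: comp_assoc Aut_group_mult)
next
  fix x show "\<one>\<^bsub>Aut_group V E I\<^esub> \<otimes>\<^bsub>Aut_group V E I\<^esub> x = x" by (simp add: Aut_group_mult)
next
  fix x assume x: "x \<in> carrier (Aut_group V E I)"
  obtain f g where xfg: "x = (f, g)" by force
  have f: "bij_betw f V V" "\<forall>x. x \<notin> V \<longrightarrow> f x = x" and g: "bij_betw g E E" "\<forall>x. x \<notin> E \<longrightarrow> g x = x"
    and inc: "\<forall>v\<in>V. \<forall>e\<in>E. (v, e) \<in> I \<longleftrightarrow> (f v, g e) \<in> I" using x xfg by (auto simp: auts_def)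
  define f' where "f' = (\<lambda>x. if x \<in> V then inv_into V f x else x)"
  define g' where "g' = (\<lambda>x. if x \<in> E then inv_into E g x else x)"
  have bf': "bij_betw f' V V"
    using bij_betw_inv_into[OF f(1)] by (rule bij_betw_cong[THEN iffD1, rotated]) (simp add: f'_def)
  have bg': "bij_betw g' E E"
    using bij_betw_inv_into[OF g(1)] by (rule bij_betw_cong[THEN iffD1, rotated]) (simp add: g'_def)
  have ff': "f (f' v) = v" if "v \<in> V" for v
    using that f(1) by (simp add: f'_def bij_betw_inv_into_right)
  have gg': "g (g' v) = v" if "v \<in> E" for v
    using that g(1) by (simp add: g'_def bij_betw_inv_into_right)
  have f'f: "f' \<circ> f = id"
  proof
    fix v show "(f' \<circ> f) v = id v"
      using f by (cases "v \<in> V") (auto simp: f'_def bij_betw_def dest: bij_betwE)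
  qed
  have g'g: "g' \<circ> g = id"
  proof
    fix v show "(g' \<circ> g) v = id v"
      using g by (cases "v \<in> E") (auto simp: g'_def bij_betw_def dest: bij_betwE)
  qed
  have "(f', g') \<in> auts V E I"
    unfolding auts_def
  proof (intro CollectI case_prodI conjI bf' bg' allI impI ballI)
    fix v e assume v: "v \<in> V" and e: "e \<in> E"
    have "f' v \<in> V" "g' e \<in> E" using bf' bg' v e by (auto dest: bij_betwE)
    then show "(v, e) \<in> I \<longleftrightarrow> (f' v, g' e) \<in> I"
      using inc ff'[OF v] gg'[OF e] by metis
  qed (auto simp: f'_def g'_def)
  moreover have "(f', g') \<otimes>\<^bsub>Aut_group V E I\<^esub> x = \<one>\<^bsub>Aut_group V E I\<^esub>"
    using f'f g'g xfg by (simp add: Aut_group_mult)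
  ultimately show "\<exists>y\<in>carrier (Aut_group V E I). y \<otimes>\<^bsub>Aut_group V E I\<^esub> x = \<one>\<^bsub>Aut_group V E I\<^esub>"
    by (metis Aut_group_simps(1))
qed




locale rsetup =
  fixes V :: "'v set" and E :: "'e set" and I :: "('v \<times> 'e) set"
    and G :: "(('v \<Rightarrow> 'v) \<times> ('e \<Rightarrow> 'e)) set"
  assumes graph: "graph V E I" and conn: "connected_graph V I" and lf: "locally_finite V I"
    and sub: "subgroup G (Aut_group V E I)" and rot: "vertex_rotary V E I G"
begin

abbreviation "AG \<equiv> Aut_group V E I"
abbreviation "A \<equiv> AG\<lparr>carrier := G\<rparr>"

lemma grpAG: "group AG" by (rule group_Aut)
lemma grpA: "group A" by (rule subgroup.subgroup_is_group[OF sub grpAG])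

lemma IVE: "I \<subseteq> V \<times> E" using graph by (simp add: graph_def)

lemma carrA [simp]: "carrier A = G" by simp
lemma multA: "x \<otimes>\<^bsub>A\<^esub> y = (fst x \<circ> fst y, snd x \<circ> snd y)" by (simp add: Aut_group_mult)
lemma oneA: "\<one>\<^bsub>A\<^esub> = (id, id)" by simp

lemma oneG [simp]: "(id, id) \<in> G" using subgroup.one_closed[OF sub] by simp

lemma GAG: "G \<subseteq> auts V E I" using subgroup.subset[OF sub] by simp

lemma act_mult [simp]:
  "fst (x \<otimes>\<^bsub>A\<^esub> y) v = fst x (fst y v)" "snd (x \<otimes>\<^bsub>A\<^esub> y) e = snd x (snd y e)"
  by (simp_all add: Aut_group_mult)

lemma inv_in [simp]: "x \<in> G \<Longrightarrow> inv\<^bsub>A\<^esub> x \<in> G"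
  using group.inv_closed[OF grpA] by simp

lemma inv_act [simp]:
  assumes "x \<in> G"
  shows "fst (inv\<^bsub>A\<^esub> x) (fst x v) = v" "fst x (fst (inv\<^bsub>A\<^esub> x) v) = v"
    "snd (inv\<^bsub>A\<^esub> x) (snd x e) = e" "snd x (snd (inv\<^bsub>A\<^esub> x) e) = e"
proof -
  have l: "inv\<^bsub>A\<^esub> x \<otimes>\<^bsub>A\<^esub> x = (id, id)" using group.l_inv[OF grpA] assms oneA by simp
  have r: "x \<otimes>\<^bsub>A\<^esub> inv\<^bsub>A\<^esub> x = (id, id)" using group.r_inv[OF grpA] assms oneA by simp
  show "fst (inv\<^bsub>A\<^esub> x) (fst x v) = v" using arg_cong[OF l, of "\<lambda>p. fst p v"] by simp
  show "fst x (fst (inv\<^bsub>A\<^esub> x) v) = v" using arg_cong[OF r, of "\<lambda>p. fst p v"] by simp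
  show "snd (inv\<^bsub>A\<^esub> x) (snd x e) = e" using arg_cong[OF l, of "\<lambda>p. snd p e"] by simp
  show "snd x (snd (inv\<^bsub>A\<^esub> x) e) = e" using arg_cong[OF r, of "\<lambda>p. snd p e"] by simp
qed

lemma inc_iff: "x \<in> G \<Longrightarrow> (v, e) \<in> I \<longleftrightarrow> (fst x v, snd x e) \<in> I"
  using auts_I[of "fst x" "snd x" V E I v e] GAG IVE by auto

lemma inj_fst: "x \<in> G \<Longrightarrow> fst x u = fst x v \<Longrightarrow> u = v"
  by (metis inv_act(1))

lemma inj_snd: "x \<in> G \<Longrightarrow> snd x u = snd x v \<Longrightarrow> u = v"
  by (metis inv_act(3))

lemma other_unique:
  assumes "(u, e) \<in> I" "(w1, e) \<in> I" "(w2, e) \<in> I" "w1 \<noteq> u" "w2 \<noteq> u"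
  shows "w1 = w2"
proof -
  have "e \<in> E" using assms(1) IVE by auto
  then have "card {v. (v, e) \<in> I} = 2" using graph by (simp add: graph_def)
  then obtain a b where ab: "{v. (v, e) \<in> I} = {a, b}" "a \<noteq> b" by (auto simp: card_2_iff)
  then show ?thesis using assms by (metis (mono_tags, lifting) empty_iff insertE mem_Collect_eq)
qed

lemma fix_other:
  assumes g: "g \<in> G" and "snd g e = e" "fst g u = u" "(u, e) \<in> I" "(w, e) \<in> I"
  shows "fst g w = w"
proof (cases "w = u")
  case False
  have "(fst g w, e) \<in> I" using inc_iff[OF g, of w e] assms by simp
  moreover have "fst g w \<noteq> u" using False inj_fst[OF g, of w u] assms by auto
  ultimately show ?thesis using other_unique[of u e "fst g w" w] assms False by auto
qed (use assms in simp)

lemma pow_G: "c \<in> G \<Longrightarrow> c [^]\<^bsub>AG\<^esub> (n::int) \<in> G"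
  using group.subgroup_int_pow_closed[OF grpAG sub] by blast

lemma pow_A: "c \<in> G \<Longrightarrow> c [^]\<^bsub>AG\<^esub> (n::int) = c [^]\<^bsub>A\<^esub> n"
  using group.int_pow_consistent[OF grpAG sub] by blast

lemma rot_tr:
  "u \<in> V \<Longrightarrow> e1 \<in> edges_at I u \<Longrightarrow> e2 \<in> edges_at I u \<Longrightarrow> \<exists>g\<in>vstab G u. snd g e1 = e2"
  using rot unfolding vertex_rotary_def by blast

lemma rot_cyc:
  "u \<in> V \<Longrightarrow> \<exists>c\<in>vstab G u. \<forall>g\<in>vstab G u. \<exists>n::int. \<forall>e\<in>edges_at I u. snd g e = snd (c [^]\<^bsub>AG\<^esub> n) e"
  using rot unfolding vertex_rotary_def by blast

lemma local_reg:
  assumes g: "g \<in> G" and u: "u \<in> V" "fst g u = u" and e1: "e1 \<in> edges_at I u" "snd g e1 = e1"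
    and e2: "e2 \<in> edges_at I u"
  shows "snd g e2 = e2"
proof -
  obtain c where c: "c \<in> vstab G u"
    and cc: "\<forall>g\<in>vstab G u. \<exists>n::int. \<forall>e\<in>edges_at I u. snd g e = snd (c [^]\<^bsub>AG\<^esub> n) e"
    using rot_cyc[OF u(1)] by blast
  obtain h where h: "h \<in> vstab G u" "snd h e1 = e2" using rot_tr[OF u(1) e1(1) e2] by blast
  have gv: "g \<in> vstab G u" using g u by (simp add: vstab_def)
  obtain n :: int where n: "\<forall>e\<in>edges_at I u. snd g e = snd (c [^]\<^bsub>AG\<^esub> n) e" using cc gv by blast
  obtain m :: int where m: "\<forall>e\<in>edges_at I u. snd h e = snd (c [^]\<^bsub>AG\<^esub> m) e" using cc h(1) by blast
  have cAG: "c \<in> carrier AG" using c GAG by (auto simp: vstab_def)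
  have comm: "c [^]\<^bsub>AG\<^esub> n \<otimes>\<^bsub>AG\<^esub> c [^]\<^bsub>AG\<^esub> m = c [^]\<^bsub>AG\<^esub> m \<otimes>\<^bsub>AG\<^esub> c [^]\<^bsub>AG\<^esub> n"
    using group.int_pow_mult[OF grpAG cAG] by (metis add.commute)
  have "snd g e2 = snd g (snd h e1)" using h by simp
  also have "\<dots> = snd (c [^]\<^bsub>AG\<^esub> n) (snd (c [^]\<^bsub>AG\<^esub> m) e1)"
    using n m e1 e2 h by (simp add: Aut_group_mult)
  also have "\<dots> = snd (c [^]\<^bsub>AG\<^esub> m) (snd (c [^]\<^bsub>AG\<^esub> n) e1)"
    using arg_cong[OF comm, of "\<lambda>p. snd p e1"] by (simp add: Aut_group_mult)
  also have "\<dots> = e2" using n m e1 h by simp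
  finally show ?thesis .
qed

lemma fix_all:
  assumes g: "g \<in> G" and a: "a \<in> V" "fst g a = a" and e: "(a, e) \<in> I" "snd g e = e"
  shows "g = \<one>\<^bsub>A\<^esub>"
proof -
  have P: "fst g v = v \<and> (\<forall>e'\<in>edges_at I v. snd g e' = e')" if "(a, v) \<in> {(x, y). adjacent I x y}\<^sup>*" for v
    using that
  proof (induction rule: rtrancl_induct)
    case base
    then show ?case using local_reg[OF g a] e a by (auto simp: edges_at_def)
  next
    case (step y z)
    then obtain e' where e': "(y, e') \<in> I" "(z, e') \<in> I" and yz: "y \<noteq> z" by (auto simp: adjacent_def)
    have ge: "snd g e' = e'" using step.IH e' by (simp add: edges_at_def)
    have gz: "fst g z = z" using fix_other[OF g ge _ e'] step.IH by simp
    have zV: "z \<in> V" using e'(2) IVE by auto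
    show ?case using gz local_reg[OF g zV gz, of e'] e' ge by (simp add: edges_at_def)
  qed
  have aut: "g \<in> auts V E I" using g GAG by auto
  have f: "fst g = id"
  proof
    fix v show "fst g v = id v"
    proof (cases "v \<in> V")
      case True then show ?thesis using P conn a(1) by (simp add: connected_graph_def)
    next
      case False then show ?thesis using aut by (auto simp: auts_def)
    qed
  qed
  have s: "snd g = id"
  proof
    fix e' show "snd g e' = id e'"
    proof (cases "e' \<in> E")
      case True
      then have "card {v. (v, e') \<in> I} = 2" using graph by (simp add: graph_def)
      then obtain v where v: "(v, e') \<in> I" by (metis (mono_tags, lifting) card.empty ex_in_conv mem_Collect_eq zero_neq_numeral)
      then have "v \<in> V" using IVE by auto
      moreover have "(a, v) \<in> {(x, y). adjacent I x y}\<^sup>*" using conn a(1) \<open>v \<in> V\<close> by (simp add: connected_graph_def)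
      ultimately show ?thesis using P v by (simp add: edges_at_def)
    next
      case False then show ?thesis using aut by (auto simp: auts_def)
    qed
  qed
  show ?thesis using f s by (simp add: prod_eq_iff oneA)
qed

lemma arc_reg: "arc_regular I G"
  unfolding arc_regular_def
proof (intro ballI)
  fix d d' assume d: "d \<in> arcs I" and d': "d' \<in> arcs I"
  have "\<exists>g\<in>G. arc_act g d = d'" using rot d d' unfolding vertex_rotary_def arc_transitive_def by blast
  then obtain g where g: "g \<in> G" "arc_act g d = d'" by blast
  show "\<exists>!g. g \<in> G \<and> arc_act g d = d'"
  proof (rule ex1I[of _ g])
    fix g' assume g': "g' \<in> G \<and> arc_act g' d = d'"
    define x where "x = inv\<^bsub>A\<^esub> g \<otimes>\<^bsub>A\<^esub> g'"
    have xG: "x \<in> G" using g g' monoid.m_closed[OF group.is_monoid[OF grpA]] unfolding x_def by simp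
    obtain v e where de: "d = (v, e)" by force
    have "(v, e) \<in> I" using d de by (simp add: arcs_def)
    moreover have "fst g' v = fst g v" "snd g' e = snd g e"
      using g g' de by (auto simp: arc_act_def prod_eq_iff)
    then have "fst x v = v" "snd x e = e"
      using inv_act[OF g(1)] by (simp_all add: x_def)
    ultimately have "x = \<one>\<^bsub>A\<^esub>" using fix_all[OF xG] IVE by blast
    then have "g' = g \<otimes>\<^bsub>A\<^esub> \<one>\<^bsub>A\<^esub>" unfolding x_def
      using g(1) g' group.inv_solve_left'[OF grpA, of "\<one>\<^bsub>A\<^esub>" g g'] group.is_monoid[OF grpA]
      by (simp add: monoid.one_closed)
    then show "g' = g" using g(1) monoid.r_one[OF group.is_monoid[OF grpA]] by simp
  qed (use g in simp)
qed

end



context rsetup begin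

lemma mG [simp]: "x \<in> G \<Longrightarrow> y \<in> G \<Longrightarrow> x \<otimes>\<^bsub>AG\<^esub> y \<in> G"
  using subgroup.m_closed[OF sub] by blast

lemma mGA: "x \<in> G \<Longrightarrow> y \<in> G \<Longrightarrow> x \<otimes>\<^bsub>A\<^esub> y \<in> G"
  by simp

lemma sub_from_pred:
  assumes "\<And>g. P g \<Longrightarrow> g \<in> G" "P (id, id)" "\<And>g. g \<in> G \<Longrightarrow> P g \<Longrightarrow> P (inv\<^bsub>A\<^esub> g)"
    "\<And>g h. g \<in> G \<Longrightarrow> h \<in> G \<Longrightarrow> P g \<Longrightarrow> P h \<Longrightarrow> P (g \<otimes>\<^bsub>AG\<^esub> h)"
  shows "subgroup {g. P g} A"
proof (rule group.subgroupI[OF grpA])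
  show "{g. P g} \<noteq> {}" using assms(2) by blast
  fix a b assume "a \<in> {g. P g}" "b \<in> {g. P g}"
  then show "a \<otimes>\<^bsub>A\<^esub> b \<in> {g. P g}" using assms by simp
qed (use assms in auto)

lemma vstab_sub: "subgroup (vstab G u) A"
proof -
  have "subgroup {g. g \<in> G \<and> fst g u = u} A"
    by (rule sub_from_pred) (auto dest: inv_act(1)[of _ u])
  then show ?thesis by (simp add: vstab_def)
qed

lemma vstab2_sub: "subgroup {g\<in>G. fst g u = u \<and> fst g w = w} A"
  by (rule sub_from_pred) (auto dest: inv_act(1)[of _ u] inv_act(1)[of _ w])

lemma estab_sub: "subgroup (estab G e) A"
proof -
  have "subgroup {g. g \<in> G \<and> snd g e = e} A"
    by (rule sub_from_pred) (auto dest: inv_act(3)[of _ e])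
  then show ?thesis by (simp add: estab_def)
qed

lemma edge_has_end: "e' \<in> E \<Longrightarrow> \<exists>v. (v, e') \<in> I"
proof -
  assume "e' \<in> E"
  then have "card {v. (v, e') \<in> I} = 2" using graph by (simp add: graph_def)
  then show ?thesis by (metis (mono_tags, lifting) card.empty ex_in_conv mem_Collect_eq zero_neq_numeral)
qed

lemma finite_ends: "finite {v. (v, e') \<in> I}"
proof (cases "e' \<in> E")
  case True
  then have "card {v. (v, e') \<in> I} = 2" using graph by (simp add: graph_def)
  then show ?thesis by (metis card.infinite zero_neq_numeral)
next
  case False then have "{v. (v, e') \<in> I} = {}" using IVE by auto
  then show ?thesis by simp
qed

end

locale rsetup2 = rsetup V E I G for V :: "'v set" and E :: "'e set" and I and G +
  fixes \<alpha> \<beta> :: 'v and e :: 'e and k lam :: nat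
  assumes val: "\<forall>v\<in>V. card (neighbours V I v) = k"
    and mult: "\<forall>u\<in>V. \<forall>v\<in>V. adjacent I u v \<longrightarrow> card (edges_between I u v) = lam"
    and \<alpha>: "\<alpha> \<in> V" and \<beta>: "\<beta> \<in> V" and adj: "adjacent I \<alpha> \<beta>"
    and e: "e \<in> E" and inc: "(\<alpha>, e) \<in> I" "(\<beta>, e) \<in> I"
begin

abbreviation "H \<equiv> vstab G \<alpha>"
abbreviation "J \<equiv> estab G e"

lemma ab: "\<alpha> \<noteq> \<beta>" using adj by (simp add: adjacent_def)

lemma has_edge: "v \<in> V \<Longrightarrow> \<exists>e'. (v, e') \<in> I"
proof -
  assume v: "v \<in> V"
  have "(v, \<alpha>) \<in> {(x, y). adjacent I x y}\<^sup>*" using conn v \<alpha> by (simp add: connected_graph_def)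
  then show ?thesis
  proof (cases rule: converse_rtranclE)
    case base then show ?thesis using inc by blast
  next
    case (step w) then show ?thesis by (auto simp: adjacent_def)
  qed
qed

lemma arc_tr: "(v, e1) \<in> I \<Longrightarrow> (w, e2) \<in> I \<Longrightarrow> \<exists>g\<in>G. fst g v = w \<and> snd g e1 = e2"
proof -
  assume "(v, e1) \<in> I" "(w, e2) \<in> I"
  then have "\<exists>g\<in>G. arc_act g (v, e1) = (w, e2)"
    using rot unfolding vertex_rotary_def arc_transitive_def arcs_def by blast
  then show ?thesis by (auto simp: arc_act_def)
qed

lemma vtrans: "v \<in> V \<Longrightarrow> \<exists>x\<in>G. fst x v = \<alpha>"
  using has_edge arc_tr inc by blast

lemma etrans: "e' \<in> E \<Longrightarrow> \<exists>y\<in>G. snd y e' = e"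
  using edge_has_end arc_tr inc by blast

lemma E\<alpha>_fin: "finite (edges_at I \<alpha>)" using lf \<alpha> by (simp add: locally_finite_def)

lemma H_orbit: "bij_betw (\<lambda>h. snd h e) H (edges_at I \<alpha>)"
proof (unfold bij_betw_def, intro conjI)
  show "inj_on (\<lambda>h. snd h e) H"
  proof (rule inj_onI)
    fix x y assume x: "x \<in> H" and y: "y \<in> H" and xy: "snd x e = snd y e"
    define z where "z = inv\<^bsub>A\<^esub> x \<otimes>\<^bsub>A\<^esub> y"
    have xG: "x \<in> G" "fst x \<alpha> = \<alpha>" and yG: "y \<in> G" "fst y \<alpha> = \<alpha>" using x y by (auto simp: vstab_def)
    have zG: "z \<in> G" using xG yG by (simp add: z_def)
    have "fst z \<alpha> = \<alpha>" unfolding z_def using xG yG inv_act(1)[OF xG(1), of \<alpha>] by simp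
    moreover have "snd z e = e" unfolding z_def using xG yG xy inv_act(3)[OF xG(1), of e] by simp
    ultimately have "z = \<one>\<^bsub>A\<^esub>" using fix_all[OF zG \<alpha>] inc by blast
    then have "y = x \<otimes>\<^bsub>A\<^esub> \<one>\<^bsub>A\<^esub>" unfolding z_def
      using xG yG group.inv_solve_left'[OF grpA, of "\<one>\<^bsub>A\<^esub>" x y] group.is_monoid[OF grpA]
      by (simp add: monoid.one_closed)
    then show "x = y" using xG monoid.r_one[OF group.is_monoid[OF grpA]] by simp
  qed
  show "(\<lambda>h. snd h e) ` H = edges_at I \<alpha>"
  proof
    show "(\<lambda>h. snd h e) ` H \<subseteq> edges_at I \<alpha>"
    proof
      fix x assume "x \<in> (\<lambda>h. snd h e) ` H"
      then obtain h where h: "h \<in> G" "fst h \<alpha> = \<alpha>" "x = snd h e" by (auto simp: vstab_def)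
      then show "x \<in> edges_at I \<alpha>" using inc_iff[OF h(1), of \<alpha> e] inc by (simp add: edges_at_def)
    qed
    show "edges_at I \<alpha> \<subseteq> (\<lambda>h. snd h e) ` H"
      using rot_tr[OF \<alpha>, of e] inc by (force simp: edges_at_def)
  qed
qed

lemma card_H: "card H = card (edges_at I \<alpha>)" and fin_H: "finite H"
  using H_orbit E\<alpha>_fin bij_betw_same_card bij_betw_finite by blast+

lemma N_fin: "finite (neighbours V I \<alpha>)"
proof (rule finite_subset)
  show "neighbours V I \<alpha> \<subseteq> (\<Union>e'\<in>edges_at I \<alpha>. {v. (v, e') \<in> I})"
    by (auto simp: neighbours_def adjacent_def edges_at_def)
  show "finite (\<Union>e'\<in>edges_at I \<alpha>. {v. (v, e') \<in> I})" using E\<alpha>_fin finite_ends by blast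
qed

lemma E\<alpha>_decomp: "edges_at I \<alpha> = (\<Union>v\<in>neighbours V I \<alpha>. edges_between I \<alpha> v)"
proof
  show "edges_at I \<alpha> \<subseteq> (\<Union>v\<in>neighbours V I \<alpha>. edges_between I \<alpha> v)"
  proof
    fix x assume x: "x \<in> edges_at I \<alpha>"
    then have "x \<in> E" using IVE by (auto simp: edges_at_def)
    then have "card {v. (v, x) \<in> I} = 2" using graph by (simp add: graph_def)
    then obtain a b where abx: "{v. (v, x) \<in> I} = {a, b}" "a \<noteq> b" by (auto simp: card_2_iff)
    then obtain w where w: "(w, x) \<in> I" "w \<noteq> \<alpha>" by blast
    then have "w \<in> V" using IVE by auto
    then show "x \<in> (\<Union>v\<in>neighbours V I \<alpha>. edges_between I \<alpha> v)"
      using w x by (auto simp: neighbours_def adjacent_def edges_between_def edges_at_def)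
  qed
  show "(\<Union>v\<in>neighbours V I \<alpha>. edges_between I \<alpha> v) \<subseteq> edges_at I \<alpha>"
    by (auto simp: edges_between_def edges_at_def)
qed

lemma card_E\<alpha>: "card (edges_at I \<alpha>) = k * lam"
proof -
  have fin: "finite (edges_between I \<alpha> v)" for v
    using E\<alpha>_fin by (rule finite_subset[rotated]) (auto simp: edges_between_def edges_at_def)
  have disj: "\<forall>v\<in>neighbours V I \<alpha>. \<forall>w\<in>neighbours V I \<alpha>. v \<noteq> w \<longrightarrow> edges_between I \<alpha> v \<inter> edges_between I \<alpha> w = {}"
    using other_unique by (fastforce simp: edges_between_def neighbours_def adjacent_def)
  have "card (edges_at I \<alpha>) = (\<Sum>v\<in>neighbours V I \<alpha>. card (edges_between I \<alpha> v))"
    unfolding E\<alpha>_decomp using card_UN_disjoint[OF N_fin _ disj] fin by blast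
  also have "\<dots> = (\<Sum>v\<in>neighbours V I \<alpha>. lam)"
    using mult \<alpha> by (intro sum.cong) (auto simp: neighbours_def)
  also have "\<dots> = k * lam" using val \<alpha> by simp
  finally show ?thesis .
qed

lemma lam_pos: "lam > 0"
proof -
  have "e \<in> edges_between I \<alpha> \<beta>" using inc by (simp add: edges_between_def)
  moreover have "finite (edges_between I \<alpha> \<beta>)"
    using E\<alpha>_fin by (rule finite_subset[rotated]) (auto simp: edges_between_def edges_at_def)
  ultimately show ?thesis using mult \<alpha> \<beta> adj by (metis card_gt_0_iff empty_iff)
qed

lemma k_pos: "k > 0"
proof -
  have "\<beta> \<in> neighbours V I \<alpha>" using \<beta> adj by (simp add: neighbours_def)
  then show ?thesis using N_fin val \<alpha> by (metis card_gt_0_iff empty_iff)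
qed

end



context rsetup begin

lemma eq_of_agree:
  assumes g: "g \<in> G" and h: "h \<in> G" and u: "u \<in> V" "(u, e') \<in> I"
    and a: "fst g u = fst h u" "snd g e' = snd h e'"
  shows "g = h"
proof -
  define x where "x = inv\<^bsub>A\<^esub> h \<otimes>\<^bsub>A\<^esub> g"
  have xG: "x \<in> G" using g h by (simp add: x_def)
  have "fst x u = u" "snd x e' = e'" unfolding x_def using a inv_act[OF h] by simp_all
  then have "x = \<one>\<^bsub>A\<^esub>" using fix_all[OF xG u(1)] u by blast
  then have "g = h \<otimes>\<^bsub>A\<^esub> \<one>\<^bsub>A\<^esub>" unfolding x_def
    using g h group.inv_solve_left'[OF grpA, of "\<one>\<^bsub>A\<^esub>" h g] group.is_monoid[OF grpA]
    by (simp add: monoid.one_closed)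
  then show "g = h" using h monoid.r_one[OF group.is_monoid[OF grpA]] by simp
qed

end

context rsetup2 begin

lemma H_cyclic: "\<exists>a\<in>H. H = generate A {a}"
proof -
  obtain c where c: "c \<in> H"
    and cc: "\<forall>g\<in>H. \<exists>n::int. \<forall>e\<in>edges_at I \<alpha>. snd g e = snd (c [^]\<^bsub>AG\<^esub> n) e"
    using rot_cyc[OF \<alpha>] by blast
  have cG: "c \<in> G" using c by (simp add: vstab_def)
  have "H \<subseteq> generate A {c}"
  proof
    fix g assume g: "g \<in> H"
    obtain n :: int where n: "\<forall>e\<in>edges_at I \<alpha>. snd g e = snd (c [^]\<^bsub>AG\<^esub> n) e" using cc g by blast
    have pH: "c [^]\<^bsub>A\<^esub> n \<in> H" using group.subgroup_int_pow_closed[OF grpA vstab_sub c] .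
    have "g = c [^]\<^bsub>A\<^esub> n"
    proof (rule eq_of_agree[OF _ _ \<alpha> inc(1)])
      show "g \<in> G" using g by (simp add: vstab_def)
      show "c [^]\<^bsub>A\<^esub> n \<in> G" using pH by (simp add: vstab_def)
      show "fst g \<alpha> = fst (c [^]\<^bsub>A\<^esub> n) \<alpha>" using g pH by (simp add: vstab_def)
      show "snd g e = snd (c [^]\<^bsub>A\<^esub> n) e" using n inc pow_A[OF cG] by (simp add: edges_at_def)
    qed
    then show "g \<in> generate A {c}" using group.generate_pow[OF grpA, of c] cG by auto
  qed
  moreover have "generate A {c} \<subseteq> H"
    using group.generate_subgroup_incl[OF grpA _ vstab_sub] c by blast
  ultimately show ?thesis using c by blast
qed

lemma ord_gen:
  assumes "a \<in> G"
  shows "group.ord A a = card (generate A {a})"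
  using group.generate_pow_card[OF grpA] assms by simp

lemma z_ex: "\<exists>z\<in>G. fst z \<alpha> = \<beta> \<and> snd z e = e"
  using arc_tr[OF inc(1) inc(2)] .

lemma z_props:
  assumes z: "z \<in> G" "fst z \<alpha> = \<beta>" "snd z e = e"
  shows "fst z \<beta> = \<alpha>" and "z \<otimes>\<^bsub>A\<^esub> z = \<one>\<^bsub>A\<^esub>" and "inv\<^bsub>A\<^esub> z = z"
    and "J = {\<one>\<^bsub>A\<^esub>, z}" and "z \<noteq> \<one>\<^bsub>A\<^esub>"
proof -
  have "(fst z \<beta>, e) \<in> I" using inc_iff[OF z(1), of \<beta> e] inc z by simp
  moreover have "fst z \<beta> \<noteq> \<beta>" using inj_fst[OF z(1), of \<beta> \<alpha>] z ab by auto
  ultimately show zb: "fst z \<beta> = \<alpha>" using other_unique[of \<beta> e "fst z \<beta>" \<alpha>] inc ab by auto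
  show zz: "z \<otimes>\<^bsub>A\<^esub> z = \<one>\<^bsub>A\<^esub>"
    by (rule eq_of_agree[OF _ _ \<alpha> inc(1)]) (use z zb oneA in \<open>simp_all\<close>)
  show "inv\<^bsub>A\<^esub> z = z" using group.inv_equality[OF grpA zz] z by simp
  show zn: "z \<noteq> \<one>\<^bsub>A\<^esub>" using z ab oneA by auto
  show "J = {\<one>\<^bsub>A\<^esub>, z}"
  proof
    show "{\<one>\<^bsub>A\<^esub>, z} \<subseteq> J" using z oneA by (simp add: estab_def)
    show "J \<subseteq> {\<one>\<^bsub>A\<^esub>, z}"
    proof
      fix g assume g: "g \<in> J"
      then have gG: "g \<in> G" "snd g e = e" by (auto simp: estab_def)
      have ge: "(fst g \<alpha>, e) \<in> I" using inc_iff[OF gG(1), of \<alpha> e] inc gG by simp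
      show "g \<in> {\<one>\<^bsub>A\<^esub>, z}"
      proof (cases "fst g \<alpha> = \<alpha>")
        case True
        then have "g = \<one>\<^bsub>A\<^esub>"
          by (intro eq_of_agree[OF gG(1) _ \<alpha> inc(1)]) (use gG oneA in simp_all)
        then show ?thesis by simp
      next
        case False
        then have "fst g \<alpha> = \<beta>" using other_unique[of \<alpha> e "fst g \<alpha>" \<beta>] ge inc ab by auto
        then have "g = z" by (intro eq_of_agree[OF gG(1) z(1) \<alpha> inc(1)]) (use gG z in simp_all)
        then show ?thesis by simp
      qed
    qed
  qed
qed

lemma HJ: "H \<inter> J = {\<one>\<^bsub>A\<^esub>}"
proof
  show "{\<one>\<^bsub>A\<^esub>} \<subseteq> H \<inter> J" using oneA by (simp add: vstab_def estab_def)
  show "H \<inter> J \<subseteq> {\<one>\<^bsub>A\<^esub>}"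
  proof
    fix g assume "g \<in> H \<inter> J"
    then have g: "g \<in> G" "fst g \<alpha> = \<alpha>" "snd g e = e" by (auto simp: vstab_def estab_def)
    then have "g = \<one>\<^bsub>A\<^esub>" by (intro eq_of_agree[OF g(1) _ \<alpha> inc(1)]) (use oneA in simp_all)
    then show "g \<in> {\<one>\<^bsub>A\<^esub>}" by simp
  qed
qed

end



context rsetup2 begin

abbreviation "L \<equiv> {g\<in>G. fst g \<alpha> = \<alpha> \<and> fst g \<beta> = \<beta>}"

lemma L_orbit: "bij_betw (\<lambda>h. snd h e) L (edges_between I \<alpha> \<beta>)"
proof (unfold bij_betw_def, intro conjI)
  show "inj_on (\<lambda>h. snd h e) L"
    by (rule inj_onI) (rule eq_of_agree[OF _ _ \<alpha> inc(1)], auto)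
  show "(\<lambda>h. snd h e) ` L = edges_between I \<alpha> \<beta>"
  proof
    show "(\<lambda>h. snd h e) ` L \<subseteq> edges_between I \<alpha> \<beta>"
    proof
      fix x assume "x \<in> (\<lambda>h. snd h e) ` L"
      then obtain h where h: "h \<in> G" "fst h \<alpha> = \<alpha>" "fst h \<beta> = \<beta>" "x = snd h e" by auto
      then show "x \<in> edges_between I \<alpha> \<beta>"
        using inc_iff[OF h(1), of \<alpha> e] inc_iff[OF h(1), of \<beta> e] inc by (simp add: edges_between_def)
    qed
    show "edges_between I \<alpha> \<beta> \<subseteq> (\<lambda>h. snd h e) ` L"
    proof
      fix x assume x: "x \<in> edges_between I \<alpha> \<beta>"
      then have "x \<in> edges_at I \<alpha>" by (simp add: edges_between_def edges_at_def)
      then obtain h where h: "h \<in> H" "snd h e = x" using rot_tr[OF \<alpha>, of e x] inc by (auto simp: edges_at_def)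
      then have hG: "h \<in> G" "fst h \<alpha> = \<alpha>" by (auto simp: vstab_def)
      have "(fst h \<beta>, x) \<in> I" using inc_iff[OF hG(1), of \<beta> e] inc h by simp
      moreover have "fst h \<beta> \<noteq> \<alpha>" using inj_fst[OF hG(1), of \<beta> \<alpha>] hG ab by auto
      ultimately have "fst h \<beta> = \<beta>" using other_unique[of \<alpha> x "fst h \<beta>" \<beta>] x ab
        by (auto simp: edges_between_def)
      then show "x \<in> (\<lambda>h. snd h e) ` L" using hG h by auto
    qed
  qed
qed

lemma card_L: "card L = lam"
proof -
  have "card L = card (edges_between I \<alpha> \<beta>)" using L_orbit bij_betw_same_card by blast
  then show ?thesis using mult \<alpha> \<beta> adj by simp
qed

lemma L_sub: "subgroup L A" by (rule vstab2_sub)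

context
  fixes a z
  assumes a: "a \<in> H" "H = generate A {a}"
    and z: "z \<in> G" "fst z \<alpha> = \<beta>" "snd z e = e"
begin

lemma aG: "a \<in> G" using a by (simp add: vstab_def)
lemma aA: "a \<in> carrier A" using aG by simp

lemma ord_a: "group.ord A a = k * lam"
  using ord_gen[OF aG] a(2) card_H card_E\<alpha> by simp

lemma zz_pt: "fst z (fst z v) = v" "snd z (snd z x) = x"
  using arg_cong[OF z_props(2)[OF z], of "\<lambda>p. fst p v"] arg_cong[OF z_props(2)[OF z], of "\<lambda>p. snd p x"]
  by (simp_all add: oneA)

lemma conj_eq: "conj_set A H z = {g\<in>G. fst g \<beta> = \<beta>}"
proof
  show "conj_set A H z \<subseteq> {g\<in>G. fst g \<beta> = \<beta>}"
  proof
    fix g assume "g \<in> conj_set A H z"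
    then obtain h where h: "h \<in> H" "g = inv\<^bsub>A\<^esub> z \<otimes>\<^bsub>A\<^esub> h \<otimes>\<^bsub>A\<^esub> z" by (auto simp: conj_set_def)
    then have hG: "h \<in> G" "fst h \<alpha> = \<alpha>" by (auto simp: vstab_def)
    show "g \<in> {g\<in>G. fst g \<beta> = \<beta>}"
      using h hG z z_props(1,3)[OF z] by simp
  qed
  show "{g\<in>G. fst g \<beta> = \<beta>} \<subseteq> conj_set A H z"
  proof
    fix g assume g: "g \<in> {g\<in>G. fst g \<beta> = \<beta>}"
    define h where "h = z \<otimes>\<^bsub>A\<^esub> g \<otimes>\<^bsub>A\<^esub> z"
    have hH: "h \<in> H" using g z z_props(1)[OF z] by (simp add: h_def vstab_def)
    have "g = inv\<^bsub>A\<^esub> z \<otimes>\<^bsub>A\<^esub> h \<otimes>\<^bsub>A\<^esub> z"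
      unfolding h_def z_props(3)[OF z] by (simp add: prod_eq_iff fun_eq_iff zz_pt)
    then show "g \<in> conj_set A H z" unfolding conj_set_def using hH by blast
  qed
qed

lemma HL: "H \<inter> conj_set A H z = L"
  unfolding conj_eq by (auto simp: vstab_def)

lemma ak_G: "a [^]\<^bsub>A\<^esub> k \<in> G"
  using monoid.nat_pow_closed[OF group.is_monoid[OF grpA]] aG by simp

lemma ord_ak: "group.ord A (a [^]\<^bsub>A\<^esub> k) = lam"
proof -
  have "group.ord A (a [^]\<^bsub>A\<^esub> k) = group.ord A a div gcd (group.ord A a) k"
    using group.ord_pow_gen[OF grpA, of a k] aG k_pos by simp
  also have "\<dots> = lam" using ord_a k_pos by simp
  finally show ?thesis .
qed

lemma L_gen: "L = generate A {a [^]\<^bsub>A\<^esub> k}"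
proof -
  have sub1: "L \<subseteq> generate A {a [^]\<^bsub>A\<^esub> k}"
  proof
    fix x assume x: "x \<in> L"
    then have "x \<in> H" by (simp add: vstab_def)
    then obtain m :: int where m: "x = a [^]\<^bsub>A\<^esub> m" using a(2) group.generate_pow[OF grpA, of a] aG by auto
    have grpL: "group (A\<lparr>carrier := L\<rparr>)" using subgroup.subgroup_is_group[OF L_sub grpA] .
    have "x [^]\<^bsub>A\<lparr>carrier := L\<rparr>\<^esub> (order (A\<lparr>carrier := L\<rparr>)) = \<one>\<^bsub>A\<lparr>carrier := L\<rparr>\<^esub>"
      using group.pow_order_eq_1[OF grpL] x by simp
    then have "x [^]\<^bsub>A\<^esub> lam = \<one>\<^bsub>A\<^esub>"
      using card_L monoid.nat_pow_consistent[OF group.is_monoid[OF grpA], of x lam L]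
      by (simp add: order_def)
    then have "a [^]\<^bsub>A\<^esub> (m * int lam) = \<one>\<^bsub>A\<^esub>"
      using m group.int_pow_pow[OF grpA, of a m "int lam"] aG by (simp add: int_pow_int)
    then have "int (k * lam) dvd m * int lam" using group.int_pow_eq_id[OF grpA aA] ord_a by simp
    then have "int k dvd m" using lam_pos by (simp add: mult.commute)
    then obtain t where t: "m = int k * t" by (auto simp: dvd_def)
    have "x = (a [^]\<^bsub>A\<^esub> k) [^]\<^bsub>A\<^esub> t"
      using m t group.int_pow_pow[OF grpA aA, of "int k" t] by (simp add: int_pow_int)
    then show "x \<in> generate A {a [^]\<^bsub>A\<^esub> k}" using group.generate_pow[OF grpA, of "a [^]\<^bsub>A\<^esub> k"] ak_G by auto
  qed
  have cg: "card (generate A {a [^]\<^bsub>A\<^esub> k}) = lam" using ord_gen[OF ak_G] ord_ak by simp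
  then have "finite (generate A {a [^]\<^bsub>A\<^esub> k})" using lam_pos card.infinite by fastforce
  then show ?thesis using card_subset_eq[OF _ sub1] cg card_L by simp
qed

end
end



context rsetup begin

lemma fst_V: "x \<in> G \<Longrightarrow> v \<in> V \<Longrightarrow> fst x v \<in> V"
proof -
  assume x: "x \<in> G" and v: "v \<in> V"
  then have "bij_betw (fst x) V V" using GAG by (auto simp: auts_def)
  then show ?thesis using v by (simp add: bij_betwE)
qed

lemma snd_E: "x \<in> G \<Longrightarrow> e' \<in> E \<Longrightarrow> snd x e' \<in> E"
proof -
  assume x: "x \<in> G" and v: "e' \<in> E"
  then have "bij_betw (snd x) E E" using GAG by (auto simp: auts_def)
  then show ?thesis using v by (simp add: bij_betwE)
qed

end

context rsetup2 begin

context
  fixes a z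
  assumes a: "a \<in> H" "H = generate A {a}"
    and z: "z \<in> G" "fst z \<alpha> = \<beta>" "snd z e = e"
begin

lemma gen_az: "generate A {a, z} = G"
proof -
  let ?K = "generate A {a, z}"
  have aG: "a \<in> G" using a by (simp add: vstab_def)
  have Ksub: "subgroup ?K A" using group.generate_is_subgroup[OF grpA, of "{a, z}"] aG z by simp
  have HK: "H \<subseteq> ?K" using a(2) group.mono_generate[OF grpA, of "{a}" "{a, z}"] by auto
  have zK: "z \<in> ?K" by (simp add: generate.incl)
  have KG: "?K \<subseteq> G" using subgroup.subset[OF Ksub] by simp
  have reach: "\<exists>g\<in>?K. fst g \<alpha> = v" if "(\<alpha>, v) \<in> {(x, y). adjacent I x y}\<^sup>*" for v
    using that
  proof (induction rule: rtrancl_induct)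
    case base
    have "(id, id) \<in> ?K" using subgroup.one_closed[OF Ksub] oneA by simp
    then show ?case by force
  next
    case (step y u)
    obtain g where g: "g \<in> ?K" "fst g \<alpha> = y" using step.IH by blast
    obtain e' where e': "(y, e') \<in> I" "(u, e') \<in> I" and yu: "y \<noteq> u"
      using step.hyps(2) by (auto simp: adjacent_def)
    have gG: "g \<in> G" using g KG by blast
    define gi where "gi = inv\<^bsub>A\<^esub> g"
    have giK: "gi \<in> ?K" unfolding gi_def using subgroup.m_inv_closed[OF Ksub g(1)] .
    have giG: "gi \<in> G" using gG by (simp add: gi_def)
    have "fst gi y = \<alpha>" using g inv_act(1)[OF gG, of \<alpha>] by (simp add: gi_def)
    then have e2: "(\<alpha>, snd gi e') \<in> I" using inc_iff[OF giG, of y e'] e' by simp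
    have u2: "(fst gi u, snd gi e') \<in> I" using inc_iff[OF giG, of u e'] e' by simp
    have u2a: "fst gi u \<noteq> \<alpha>"
      using inj_fst[OF giG, of u y] g inv_act(1)[OF gG, of \<alpha>] yu by (auto simp: gi_def)
    obtain h where h: "h \<in> H" "snd h e = snd gi e'"
      using rot_tr[OF \<alpha>, of e "snd gi e'"] inc e2 by (auto simp: edges_at_def)
    have hG: "h \<in> G" "fst h \<alpha> = \<alpha>" using h by (auto simp: vstab_def)
    have "(fst h \<beta>, snd gi e') \<in> I" using inc_iff[OF hG(1), of \<beta> e] inc h by simp
    moreover have "fst h \<beta> \<noteq> \<alpha>" using inj_fst[OF hG(1), of \<beta> \<alpha>] hG ab by auto
    ultimately have hb: "fst h \<beta> = fst gi u" using other_unique[OF e2 _ u2] u2a by blast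
    define w where "w = g \<otimes>\<^bsub>A\<^esub> h \<otimes>\<^bsub>A\<^esub> z"
    have "w \<in> ?K" unfolding w_def using subgroup.m_closed[OF Ksub] g HK h zK by blast
    moreover have "fst w \<alpha> = u" unfolding w_def using z hb inv_act(2)[OF gG] by (simp add: gi_def)
    ultimately show ?case by blast
  qed
  have "G \<subseteq> ?K"
  proof
    fix x assume x: "x \<in> G"
    have "fst x \<alpha> \<in> V" using fst_V[OF x \<alpha>] .
    then have "(\<alpha>, fst x \<alpha>) \<in> {(x, y). adjacent I x y}\<^sup>*" using conn \<alpha> by (simp add: connected_graph_def)
    then obtain g where g: "g \<in> ?K" "fst g \<alpha> = fst x \<alpha>" using reach by blast
    have gG: "g \<in> G" using g KG by blast
    define y where "y = inv\<^bsub>A\<^esub> g \<otimes>\<^bsub>A\<^esub> x"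
    have "fst (inv\<^bsub>A\<^esub> g) (fst x \<alpha>) = \<alpha>" using inv_act(1)[OF gG, of \<alpha>] g(2) by simp
    then have yH: "y \<in> H" using x gG unfolding y_def vstab_def by simp
    have "x = g \<otimes>\<^bsub>A\<^esub> y"
      using group.inv_solve_left'[OF grpA, of y g x] x gG yH by (simp add: y_def vstab_def)
    moreover have "y \<in> ?K" using HK yH by blast
    ultimately show "x \<in> ?K" using subgroup.m_closed[OF Ksub g(1)] by simp
  qed
  then show ?thesis using KG by blast
qed

end

definition phi where "phi v = {y\<in>G. fst y v = \<alpha>}"
definition psi where "psi e' = {y\<in>G. snd y e' = e}"

lemma rcos_v: "x \<in> G \<Longrightarrow> H #>\<^bsub>A\<^esub> x = phi (fst (inv\<^bsub>A\<^esub> x) \<alpha>)"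
proof
  assume x: "x \<in> G"
  show "H #>\<^bsub>A\<^esub> x \<subseteq> phi (fst (inv\<^bsub>A\<^esub> x) \<alpha>)"
    using x by (auto simp: r_coset_def phi_def vstab_def)
  show "phi (fst (inv\<^bsub>A\<^esub> x) \<alpha>) \<subseteq> H #>\<^bsub>A\<^esub> x"
  proof
    fix y assume "y \<in> phi (fst (inv\<^bsub>A\<^esub> x) \<alpha>)"
    then have y: "y \<in> G" "fst y (fst (inv\<^bsub>A\<^esub> x) \<alpha>) = \<alpha>" by (auto simp: phi_def)
    define h where "h = y \<otimes>\<^bsub>A\<^esub> inv\<^bsub>A\<^esub> x"
    have hH: "h \<in> H" using x y by (simp add: h_def vstab_def)
    have "y = h \<otimes>\<^bsub>A\<^esub> x" using x y by (simp add: h_def prod_eq_iff fun_eq_iff)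
    then show "y \<in> H #>\<^bsub>A\<^esub> x" using hH unfolding r_coset_def by blast
  qed
qed

lemma rcos_e: "y \<in> G \<Longrightarrow> J #>\<^bsub>A\<^esub> y = psi (snd (inv\<^bsub>A\<^esub> y) e)"
proof
  assume x: "y \<in> G"
  show "J #>\<^bsub>A\<^esub> y \<subseteq> psi (snd (inv\<^bsub>A\<^esub> y) e)"
    using x by (auto simp: r_coset_def psi_def estab_def)
  show "psi (snd (inv\<^bsub>A\<^esub> y) e) \<subseteq> J #>\<^bsub>A\<^esub> y"
  proof
    fix w assume "w \<in> psi (snd (inv\<^bsub>A\<^esub> y) e)"
    then have w: "w \<in> G" "snd w (snd (inv\<^bsub>A\<^esub> y) e) = e" by (auto simp: psi_def)
    define j where "j = w \<otimes>\<^bsub>A\<^esub> inv\<^bsub>A\<^esub> y"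
    have jJ: "j \<in> J" using x w by (simp add: j_def estab_def)
    have "w = j \<otimes>\<^bsub>A\<^esub> y" using x w by (simp add: j_def prod_eq_iff fun_eq_iff)
    then show "w \<in> J #>\<^bsub>A\<^esub> y" using jJ unfolding r_coset_def by blast
  qed
qed

lemma phi_eq: "x \<in> G \<Longrightarrow> fst x v = \<alpha> \<Longrightarrow> phi v = H #>\<^bsub>A\<^esub> x"
  using rcos_v[of x] inv_act(1)[of x v] by simp

lemma psi_eq: "y \<in> G \<Longrightarrow> snd y e' = e \<Longrightarrow> psi e' = J #>\<^bsub>A\<^esub> y"
  using rcos_e[of y] inv_act(3)[of y e'] by simp

end



context rsetup2 begin

lemma iso_graph: "graph_isomorphic V E I (cos_V A H) (cos_E A J) (cos_I A H J)"
  unfolding graph_isomorphic_def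
proof (intro exI conjI)
  show "bij_betw phi V (cos_V A H)"
  proof (unfold bij_betw_def, intro conjI)
    show "inj_on phi V"
    proof (rule inj_onI)
      fix v1 v2 assume v: "v1 \<in> V" "v2 \<in> V" "phi v1 = phi v2"
      obtain x where x: "x \<in> G" "fst x v1 = \<alpha>" using vtrans[OF v(1)] by blast
      then have "x \<in> phi v2" using v(3) by (auto simp: phi_def)
      then show "v1 = v2" using x inj_fst[OF x(1), of v1 v2] by (simp add: phi_def)
    qed
    show "phi ` V = cos_V A H"
    proof
      show "phi ` V \<subseteq> cos_V A H"
      proof
        fix c assume "c \<in> phi ` V"
        then obtain v where v: "v \<in> V" "c = phi v" by blast
        obtain x where x: "x \<in> G" "fst x v = \<alpha>" using vtrans[OF v(1)] by blast
        show "c \<in> cos_V A H" using phi_eq[OF x] v x by (auto simp: cos_V_def RCOSETS_def)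
      qed
      show "cos_V A H \<subseteq> phi ` V"
      proof
        fix c assume "c \<in> cos_V A H"
        then obtain x where x: "x \<in> G" "c = H #>\<^bsub>A\<^esub> x" by (auto simp: cos_V_def RCOSETS_def)
        then show "c \<in> phi ` V" using rcos_v[OF x(1)] fst_V[OF inv_in[OF x(1)] \<alpha>] by blast
      qed
    qed
  qed
  show "bij_betw psi E (cos_E A J)"
  proof (unfold bij_betw_def, intro conjI)
    show "inj_on psi E"
    proof (rule inj_onI)
      fix v1 v2 assume v: "v1 \<in> E" "v2 \<in> E" "psi v1 = psi v2"
      obtain x where x: "x \<in> G" "snd x v1 = e" using etrans[OF v(1)] by blast
      then have "x \<in> psi v2" using v(3) by (auto simp: psi_def)
      then show "v1 = v2" using x inj_snd[OF x(1), of v1 v2] by (simp add: psi_def)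
    qed
    show "psi ` E = cos_E A J"
    proof
      show "psi ` E \<subseteq> cos_E A J"
      proof
        fix c assume "c \<in> psi ` E"
        then obtain v where v: "v \<in> E" "c = psi v" by blast
        obtain x where x: "x \<in> G" "snd x v = e" using etrans[OF v(1)] by blast
        show "c \<in> cos_E A J" using psi_eq[OF x] v x by (auto simp: cos_E_def RCOSETS_def)
      qed
      show "cos_E A J \<subseteq> psi ` E"
      proof
        fix c assume "c \<in> cos_E A J"
        then obtain x where x: "x \<in> G" "c = J #>\<^bsub>A\<^esub> x" by (auto simp: cos_E_def RCOSETS_def)
        then show "c \<in> psi ` E" using rcos_e[OF x(1)] snd_E[OF inv_in[OF x(1)] e] by blast
      qed
    qed
  qed
  show "\<forall>v\<in>V. \<forall>e'\<in>E. (v, e') \<in> I \<longleftrightarrow> (phi v, psi e') \<in> cos_I A H J"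
  proof (intro ballI iffI)
    fix v e' assume v: "v \<in> V" and e': "e' \<in> E" and ve: "(v, e') \<in> I"
    obtain x where x: "x \<in> G" "fst x v = \<alpha>" using vtrans[OF v] by blast
    obtain y where y: "y \<in> G" "snd y e' = e" using etrans[OF e'] by blast
    have ax: "(\<alpha>, snd x e') \<in> I" using inc_iff[OF x(1), of v e'] ve x by simp
    obtain h where h: "h \<in> H" "snd h e = snd x e'"
      using rot_tr[OF \<alpha>, of e "snd x e'"] inc ax by (auto simp: edges_at_def)
    have hG: "h \<in> G" using h by (simp add: vstab_def)
    define j where "j = y \<otimes>\<^bsub>A\<^esub> inv\<^bsub>A\<^esub> x \<otimes>\<^bsub>A\<^esub> h"
    have jJ: "j \<in> J" unfolding j_def estab_def using x y hG h(2) inv_act(3)[OF x(1), of e'] by simp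
    have ihH: "inv\<^bsub>A\<^esub> h \<in> H" using subgroup.m_inv_closed[OF vstab_sub h(1)] .
    have "y \<otimes>\<^bsub>A\<^esub> inv\<^bsub>A\<^esub> x = j \<otimes>\<^bsub>A\<^esub> inv\<^bsub>A\<^esub> h"
      using hG by (simp add: j_def prod_eq_iff fun_eq_iff)
    then have "y \<otimes>\<^bsub>A\<^esub> inv\<^bsub>A\<^esub> x \<in> J <#>\<^bsub>A\<^esub> H" using jJ ihH unfolding set_mult_def by blast
    then have "(H #>\<^bsub>A\<^esub> x, J #>\<^bsub>A\<^esub> y) \<in> cos_I A H J"
      unfolding cos_I_def mem_Collect_eq
    proof (intro exI conjI)
      show "(H #>\<^bsub>A\<^esub> x, J #>\<^bsub>A\<^esub> y) = (H #>\<^bsub>A\<^esub> x, J #>\<^bsub>A\<^esub> y)" by (rule refl)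
    qed (use x(1) y(1) in simp_all)
    then show "(phi v, psi e') \<in> cos_I A H J"
      using phi_eq[OF x] psi_eq[OF y] by simp
  next
    fix v e' assume v: "v \<in> V" and e': "e' \<in> E" and c: "(phi v, psi e') \<in> cos_I A H J"
    from c obtain x y where xy0: "(phi v, psi e') = (H #>\<^bsub>A\<^esub> x, J #>\<^bsub>A\<^esub> y)" "x \<in> carrier A" "y \<in> carrier A"
      "y \<otimes>\<^bsub>A\<^esub> inv\<^bsub>A\<^esub> x \<in> J <#>\<^bsub>A\<^esub> H" unfolding cos_I_def mem_Collect_eq by blast
    then have xy: "x \<in> G" "y \<in> G" "phi v = H #>\<^bsub>A\<^esub> x" "psi e' = J #>\<^bsub>A\<^esub> y"
      "y \<otimes>\<^bsub>A\<^esub> inv\<^bsub>A\<^esub> x \<in> J <#>\<^bsub>A\<^esub> H" by simp_all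
    from xy(5) obtain j h where jh: "j \<in> J" "h \<in> H" "y \<otimes>\<^bsub>A\<^esub> inv\<^bsub>A\<^esub> x = j \<otimes>\<^bsub>A\<^esub> h"
      unfolding set_mult_def by blast
    have jG: "j \<in> G" "snd j e = e" and hG: "h \<in> G" "fst h \<alpha> = \<alpha>" using jh by (auto simp: estab_def vstab_def)
    have "x \<in> H #>\<^bsub>A\<^esub> x" using group.rcos_self[OF grpA _ vstab_sub] xy by simp
    then have "x \<in> phi v" unfolding xy(3) .
    then have xv: "fst x v = \<alpha>" by (simp add: phi_def)
    have "y \<in> J #>\<^bsub>A\<^esub> y" using group.rcos_self[OF grpA _ estab_sub] xy by simp
    then have "y \<in> psi e'" unfolding xy(4) .
    then have ye: "snd y e' = e" by (simp add: psi_def)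
    have "snd (y \<otimes>\<^bsub>A\<^esub> inv\<^bsub>A\<^esub> x) (snd x e') = snd (j \<otimes>\<^bsub>A\<^esub> h) (snd x e')" using jh by simp
    then have "snd j e = snd j (snd h (snd x e'))" using xy ye jG by simp
    then have "snd h (snd x e') = e" using inj_snd[OF jG(1), of e "snd h (snd x e')"] by simp
    then have "snd (inv\<^bsub>A\<^esub> h) (snd h (snd x e')) = snd (inv\<^bsub>A\<^esub> h) e" by simp
    then have "snd x e' = snd (inv\<^bsub>A\<^esub> h) e" using inv_act(3)[OF hG(1)] by simp
    moreover have "(\<alpha>, snd (inv\<^bsub>A\<^esub> h) e) \<in> I"
      using inc_iff[OF inv_in[OF hG(1)], of \<alpha> e] inc inv_act(1)[OF hG(1), of \<alpha>] hG by simp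
    ultimately show "(v, e') \<in> I" using inc_iff[OF xy(1), of v e'] xv by simp
  qed
qed

end



theorem lemma3p1:
  fixes V :: "'v set" and E :: "'e set" and I :: "('v \<times> 'e) set"
    and G :: "(('v \<Rightarrow> 'v) \<times> ('e \<Rightarrow> 'e)) set"
    and k lam :: nat and \<alpha> \<beta> :: 'v and e :: 'e
  assumes graph: "graph V E I"
    and conn: "connected_graph V I"
    and lf: "locally_finite V I"
    and nonempty: "E \<noteq> {}"
    and sub: "subgroup G (Aut_group V E I)"
    and rot: "vertex_rotary V E I G"
    and val: "\<forall>v\<in>V. card (neighbours V I v) = k"
    and mult: "\<forall>u\<in>V. \<forall>v\<in>V. adjacent I u v \<longrightarrow> card (edges_between I u v) = lam"
    and \<alpha>: "\<alpha> \<in> V" and \<beta>: "\<beta> \<in> V" and adj: "adjacent I \<alpha> \<beta>"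
    and e: "e \<in> E" and inc: "(\<alpha>, e) \<in> I" "(\<beta>, e) \<in> I"
  shows "let A = (Aut_group V E I)\<lparr>carrier := G\<rparr>; H = vstab G \<alpha>; J = estab G e in
     graph_isomorphic V E I (cos_V A H) (cos_E A J) (cos_I A H J) \<and>
     (\<exists>a z. a \<in> G \<and> z \<in> G \<and>
        generate A {a, z} = G \<and>
        H = generate A {a} \<and> A\<lparr>carrier := H\<rparr> \<cong> integer_mod_group (k * lam) \<and>
        H \<inter> conj_set A H z = generate A {a [^]\<^bsub>A\<^esub> k} \<and>
        A\<lparr>carrier := H \<inter> conj_set A H z\<rparr> \<cong> integer_mod_group lam \<and>
        J = generate A {z} \<and> A\<lparr>carrier := J\<rparr> \<cong> integer_mod_group 2 \<and>
        H \<inter> J = {\<one>\<^bsub>A\<^esub>} \<and>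
        z \<notin> generate A {a} \<and> inv\<^bsub>A\<^esub> a \<otimes>\<^bsub>A\<^esub> z \<otimes>\<^bsub>A\<^esub> a \<notin> generate A {a} \<and>
        rotary_pair A a z \<and>
        arc_regular I G)"
proof -
  interpret rsetup2 V E I G \<alpha> \<beta> e k lam
    using graph conn lf sub rot val mult \<alpha> \<beta> adj e inc
    by (simp add: rsetup2_def rsetup_def rsetup2_axioms_def)
  obtain a where a: "a \<in> H" "H = generate A {a}" using H_cyclic by blast
  obtain z where z: "z \<in> G" "fst z \<alpha> = \<beta>" "snd z e = e" using z_ex by blast
  have aG: "a \<in> G" using a by (simp add: vstab_def)
  have gaz: "generate A {a, z} = G" using gen_az[OF a z] .
  have isoH: "A\<lparr>carrier := H\<rparr> \<cong> integer_mod_group (k * lam)"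
    using cyclic_iso[OF grpA aA[OF a z] ord_a[OF a z]] k_pos lam_pos a(2) by simp
  have HC: "H \<inter> conj_set A H z = generate A {a [^]\<^bsub>A\<^esub> k}"
    using HL[OF a z] L_gen[OF a z] by simp
  have isoL: "A\<lparr>carrier := H \<inter> conj_set A H z\<rparr> \<cong> integer_mod_group lam"
    using cyclic_iso[OF grpA _ ord_ak[OF a z]] ak_G[OF a z] lam_pos HC by simp
  have Jz: "J = {\<one>\<^bsub>A\<^esub>, z}" using z_props(4)[OF z] .
  have zn: "z \<noteq> \<one>\<^bsub>A\<^esub>" using z_props(5)[OF z] .
  have Jgen: "J = generate A {z}"
  proof
    show "generate A {z} \<subseteq> J"
      using group.generate_subgroup_incl[OF grpA _ estab_sub] z by (simp add: estab_def)
    have "\<one>\<^bsub>A\<^esub> \<in> generate A {z}" by (rule generate.one)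
    moreover have "z \<in> generate A {z}" by (rule generate.incl) simp
    ultimately show "J \<subseteq> generate A {z}" unfolding Jz by blast
  qed
  have ordz: "group.ord A z = 2"
  proof -
    have "group.ord A z = card (generate A {z})" using ord_gen z(1) by simp
    also have "\<dots> = card {\<one>\<^bsub>A\<^esub>, z}" using Jgen Jz by simp
    also have "\<dots> = 2" using zn by (simp only: card_2_iff) blast
    finally show ?thesis .
  qed
  have isoJ: "A\<lparr>carrier := J\<rparr> \<cong> integer_mod_group 2"
    using cyclic_iso[OF grpA _ ordz] z(1) Jgen by simp
  have znot: "z \<notin> generate A {a}"
  proof
    assume "z \<in> generate A {a}"
    then have "z \<in> H" using a(2) by simp
    then show False using z ab by (simp add: vstab_def)
  qed
  have cnot: "inv\<^bsub>A\<^esub> a \<otimes>\<^bsub>A\<^esub> z \<otimes>\<^bsub>A\<^esub> a \<notin> generate A {a}"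
  proof
    assume "inv\<^bsub>A\<^esub> a \<otimes>\<^bsub>A\<^esub> z \<otimes>\<^bsub>A\<^esub> a \<in> generate A {a}"
    then have "inv\<^bsub>A\<^esub> a \<otimes>\<^bsub>A\<^esub> z \<otimes>\<^bsub>A\<^esub> a \<in> H" using a(2) by simp
    then have "fst (inv\<^bsub>A\<^esub> a) \<beta> = \<alpha>" using a z by (simp add: vstab_def)
    then have "fst a (fst (inv\<^bsub>A\<^esub> a) \<beta>) = fst a \<alpha>" by simp
    then show False using inv_act(2)[OF aG, of \<beta>] a ab by (simp add: vstab_def)
  qed
  have ordpos: "group.ord A a \<noteq> 0" using ord_a[OF a z] k_pos lam_pos by simp
  have rp: "rotary_pair A a z"
    unfolding rotary_pair_def using aG z(1) gaz ordpos ordz znot by simp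
  show ?thesis
    unfolding Let_def
    using iso_graph aG z(1) gaz a(2) isoH HC isoL Jgen isoJ HJ znot cnot rp arc_reg
    by blast
qed


end
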